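(* For all integers $j,\ell\ge 0$, $\theta\in\mathbb{R}$ and $t>0$, \[ \mathbb{P} \left(| \Psi_{j+\ell} (\theta) - \Psi_j (\theta) - \ell \theta | \geq t \,\middle|\, \mathcal{F}_j \right) \leq 2 \exp \left( - \frac{t^2 \beta}{8 \log \left(1 + \frac{\beta \ell}{1 + \beta j} \right)}\right). \]
   Context: Fix $\beta>0$. Let $(\boldsymbol{\alpha}_j)_{j\ge0}$ be independent complex random variables, each with law invariant under multiplication by complex numbers of modulus one, with $|\boldsymbol{\alpha}_j|^2$ having the Beta$(1,\frac{\beta}{2}(j+1))$ law, i.e. density $\frac{\beta(j+1)}{2}(1-x)^{\frac{\beta}{2}(j+1)-1}$ on $[0,1]$. Define recursively $\Psi_j(\theta)=(j+1)\theta-2\sum_{r=0}^{j-1}\Im\log\big(1-\boldsymbol{\alpha}_r\mathrm{e}^{\mathrm{i}\Psi_r(\theta)}\big)$ (principal branch of the logarithm). $\mathcal{F}_j$ is the $\sigma$-algebra generated by $(\boldsymbol{\alpha}_r)_{0\le r\le j-1}$. *)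

theory Defs
  imports "HOL-Probability.Probability"
begin

function Psi :: "(nat \<Rightarrow> complex) \<Rightarrow> nat \<Rightarrow> real \<Rightarrow> real" where
  "Psi a j \<theta> = real (j + 1) * \<theta>
      - 2 * (\<Sum>r\<in>{..<j}. Im (Ln (1 - a r * exp (\<i> * complex_of_real (Psi a r \<theta>)))))"
  by auto
termination by (relation "Wellfounded.measure (\<lambda>(a, j, \<theta>). j)") auto

declare Psi.simps [simp del]

definition filt :: "'w measure \<Rightarrow> (nat \<Rightarrow> 'w \<Rightarrow> complex) \<Rightarrow> nat \<Rightarrow> 'w measure" where
  "filt M \<alpha> j = sigma (space M)
     (\<Union>r\<in>{..<j}. {(\<alpha> r) -` A \<inter> space M | A. A \<in> sets (borel :: complex measure)})"

end

theory Submission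
  imports Defs "HOL-Real_Asymp.Real_Asymp" "HOL-Complex_Analysis.Cauchy_Integral_Theorem"
begin


definition Tm :: "real \<Rightarrow> real \<Rightarrow> nat \<Rightarrow> real" where
  "Tm y c k = (\<Prod>m<k. (real m)^2 + y^2) / (fact k * pochhammer c k)"

lemma pochhammer_pos_real: "(c::real) > 0 \<Longrightarrow> pochhammer c k > 0"
  by (induction k) (auto simp: pochhammer_Suc)

lemma pochhammer_ge1_real: "(c::real) \<ge> 1 \<Longrightarrow> pochhammer c k \<ge> 1"
proof (induction k)
  case (Suc k)
  have "1 * 1 \<le> pochhammer c k * (c + real k)"
    by (rule mult_mono) (use Suc in auto)
  then show ?case by (simp add: pochhammer_Suc)
qed simp

lemma Tm_nonneg: "c > 0 \<Longrightarrow> Tm y c k \<ge> 0"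
  unfolding Tm_def using pochhammer_pos_real[of c k]
  by (intro divide_nonneg_pos prod_nonneg) auto

lemma Tm_0 [simp]: "Tm y c 0 = 1"
  by (simp add: Tm_def)

lemma Tm_Suc: "c > 0 \<Longrightarrow> Tm y c (Suc k) = Tm y c k * ((real k)^2 + y^2) / ((real k + 1) * (c + real k))"
  using pochhammer_pos_real[of c k]
  by (simp add: Tm_def pochhammer_Suc field_simps)

lemma Tm_shift: "c > 0 \<Longrightarrow> Tm y (c + 1) k = Tm y c k * c / (c + real k)"
proof -
  assume c: "c > 0"
  have "pochhammer c (Suc k) = c * pochhammer (c + 1) k" by (rule pochhammer_rec)
  moreover have "pochhammer c (Suc k) = pochhammer c k * (c + real k)" by (simp add: pochhammer_Suc)
  ultimately have "pochhammer (c + 1) k = pochhammer c k * (c + real k) / c" using c by (simp add: field_simps)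
  then have "Tm y (c + 1) k = (\<Prod>m<k. (real m)^2 + y^2) / (fact k * (pochhammer c k * (c + real k) / c))"
    by (simp only: Tm_def)
  then show ?thesis using c pochhammer_pos_real[of c k]
    by (simp add: Tm_def field_simps)
qed

lemma Tm_contig:
  assumes c: "c > 0"
  shows "c^2 * (\<Sum>k<n. Tm y c k) - (c^2 + y^2) * (\<Sum>k<n. Tm y (c + 1) k) = - c * real n * Tm y c n"
proof (induction n)
  case (Suc n)
  have e: "c^2 * Tm y c n - (c^2 + y^2) * Tm y (c + 1) n = - c * real (Suc n) * Tm y c (Suc n) + c * real n * Tm y c n"
  proof -
    have s1: "Tm y c (Suc n) = Tm y c n * ((real n)^2 + y^2) / ((real n + 1) * (c + real n))" by (rule Tm_Suc[OF c])
    have s2: "Tm y (c + 1) n = Tm y c n * c / (c + real n)" by (rule Tm_shift[OF c])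
    have p1: "c + real n \<noteq> 0" "real n + 1 \<noteq> 0" using c by auto
    define d where "d = c + real n"
    define T where "T = Tm y c n"
    have d: "d \<noteq> 0" using p1 by (simp add: d_def)
    have s3: "real (Suc n) * Tm y c (Suc n) = T * ((real n)^2 + y^2) / d"
    proof -
      define r where "r = real n + 1"
      have r: "r \<noteq> 0" "real (Suc n) = r" by (auto simp: r_def)
      have "real (Suc n) * Tm y c (Suc n) = r * (T * ((real n)^2 + y^2) / (r * d))"
        by (simp only: r(2) s1 T_def d_def r_def)
      also have "\<dots> = T * ((real n)^2 + y^2) / d" using r(1) by simp
      finally show ?thesis .
    qed
    have h: "c^2 * T - (c^2 + y^2) * (T * c / d) = - c * (T * ((real n)^2 + y^2) / d) + c * real n * T"
      using d by (simp add: field_simps power2_eq_square d_def)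
    have h2: "- c * real (Suc n) * Tm y c (Suc n) = - c * (T * ((real n)^2 + y^2) / d)"
      by (metis mult.assoc s3)
    show ?thesis unfolding s2 h2 T_def[symmetric] d_def[symmetric] by (rule h)
  qed
  show ?case using Suc e by (simp add: algebra_simps)
qed simp

lemma Tm_step:
  assumes c: "c > 0"
  shows "(\<Sum>k<n. Tm y c k) \<le> (1 + y^2 / c^2) * (\<Sum>k<n. Tm y (c + 1) k)"
proof -
  have "c^2 * (\<Sum>k<n. Tm y c k) \<le> (c^2 + y^2) * (\<Sum>k<n. Tm y (c + 1) k)"
  proof -
    have "0 \<le> c * real n * Tm y c n" using c Tm_nonneg[OF c, where y=y and k=n] by simp
    then show ?thesis using Tm_contig[OF c, where n=n and y=y] by linarith
  qed
  then show ?thesis using c by (simp add: field_simps)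
qed

lemma Tm_iter:
  assumes c: "c > 0"
  shows "(\<Sum>k<n. Tm y c k) \<le> (\<Prod>i<m. 1 + y^2 / (c + real i)^2) * (\<Sum>k<n. Tm y (c + real m) k)"
proof (induction m)
  case (Suc m)
  have cm: "c + real m > 0" using c by simp
  have "(\<Sum>k<n. Tm y (c + real m) k) \<le> (1 + y^2 / (c + real m)^2) * (\<Sum>k<n. Tm y (c + real m + 1) k)"
    by (rule Tm_step[OF cm])
  then have "(\<Prod>i<m. 1 + y^2 / (c + real i)^2) * (\<Sum>k<n. Tm y (c + real m) k)
     \<le> (\<Prod>i<m. 1 + y^2 / (c + real i)^2) * ((1 + y^2 / (c + real m)^2) * (\<Sum>k<n. Tm y (c + real m + 1) k))"
    by (intro mult_left_mono prod_nonneg) auto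
  moreover have "c + real (Suc m) = c + real m + 1" by simp
  moreover have "(\<Prod>i<Suc m. 1 + y^2 / (c + real i)^2) = (\<Prod>i<m. 1 + y^2 / (c + real i)^2) * (1 + y^2 / (c + real m)^2)"
    by simp
  ultimately show ?case using Suc.IH by (metis (no_types, lifting) mult.assoc order_trans)
qed simp

lemma sum_inv_sq_le:
  assumes c: "c > 1/2"
  shows "(\<Sum>i<m. 1 / (c + real i)^2) \<le> 1 / (c - 1/2) - 1 / (c + real m - 1/2)"
proof (induction m)
  case (Suc m)
  define x where "x = c + real m"
  have x: "x > 1/2" using c by (simp add: x_def)
  have e: "1 / (x - 1/2) - 1 / (x + 1/2) = 1 / (x^2 - 1/4)"
    using x by (simp add: field_simps power2_eq_square)
  have "1 / x^2 \<le> 1 / (x^2 - 1/4)"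
  proof (rule divide_left_mono)
    have "x * x > 1/2 * (1/2)" using x by (intro mult_strict_mono) auto
    then have "x^2 > 1/4" by (simp add: power2_eq_square)
    then show "0 < x^2 * (x^2 - 1/4)" by (intro mult_pos_pos) auto
  qed auto
  then have "1 / (c + real m)^2 \<le> 1 / (c + real m - 1/2) - 1 / (c + real m + 1 - 1/2)"
    using e by (simp add: x_def algebra_simps)
  then show ?case using Suc by simp
qed simp

lemma prod_le_exp:
  assumes c: "c > 1/2"
  shows "(\<Prod>i<m. 1 + y^2 / (c + real i)^2) \<le> exp (y^2 / (c - 1/2))"
proof -
  have "(\<Prod>i<m. 1 + y^2 / (c + real i)^2) \<le> (\<Prod>i<m. exp (y^2 / (c + real i)^2))"
  proof (rule prod_mono)
    fix i assume "i \<in> {..<m}"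
    have "0 \<le> y^2 / (c + real i)^2" by simp
    then show "0 \<le> 1 + y^2 / (c + real i)^2 \<and> 1 + y^2 / (c + real i)^2 \<le> exp (y^2 / (c + real i)^2)"
      using exp_ge_add_one_self[of "y^2 / (c + real i)^2"] by linarith
  qed
  also have "\<dots> = exp (y^2 * (\<Sum>i<m. 1 / (c + real i)^2))"
    by (simp add: exp_sum sum_distrib_left)
  also have "\<dots> \<le> exp (y^2 / (c - 1/2))"
  proof -
    have "(\<Sum>i<m. 1 / (c + real i)^2) \<le> 1 / (c - 1/2)"
    proof -
      have "0 < 1 / (c + real m - 1/2)" using c by simp
      then show ?thesis using sum_inv_sq_le[OF c, of m] by linarith
    qed
    then have "y^2 * (\<Sum>i<m. 1 / (c + real i)^2) \<le> y^2 * (1 / (c - 1/2))"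
      by (intro mult_left_mono) auto
    then show ?thesis by simp
  qed
  finally show ?thesis .
qed

lemma Tm_lim:
  assumes c: "c > 0"
  shows "(\<lambda>m. \<Sum>k<n. Tm y (c + real m) k) \<longlonglongrightarrow> (\<Sum>k<n. if k = 0 then 1 else 0)"
proof -
  have t: "(\<lambda>m. Tm y (c + real m) k) \<longlonglongrightarrow> (if k = 0 then 1 else 0)" for k
  proof (cases k)
    case 0 then show ?thesis by simp
  next
    case (Suc k')
    define P where "P = (\<Prod>m<k. (real m)^2 + y^2) / fact k"
    have P: "P \<ge> 0" unfolding P_def by (intro divide_nonneg_pos prod_nonneg) auto
    have up: "Tm y (c + real m) k \<le> P / (c + real m)" if "c + real m \<ge> 1" for m
    proof -
      have "pochhammer (c + real m) k = (c + real m) * pochhammer (c + real m + 1) k'"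
        using Suc by (simp add: pochhammer_rec)
      moreover have "pochhammer (c + real m + 1) k' \<ge> 1" using that by (intro pochhammer_ge1_real) auto
      ultimately have "pochhammer (c + real m) k \<ge> c + real m" using that
        by (metis mult.right_neutral mult_left_mono order_trans zero_le_one)
      then have "Tm y (c + real m) k = P / pochhammer (c + real m) k"
        by (simp add: Tm_def P_def field_simps)
      also have "\<dots> \<le> P / (c + real m)"
        using \<open>pochhammer (c + real m) k \<ge> c + real m\<close> that P by (intro divide_left_mono) auto
      finally show ?thesis .
    qed
    have lim0: "(\<lambda>m. P / (c + real m)) \<longlonglongrightarrow> 0" using c by real_asymp
    have ev: "eventually (\<lambda>m. c + real m \<ge> 1) sequentially"
      using c by real_asymp
    have "(\<lambda>m. Tm y (c + real m) k) \<longlonglongrightarrow> 0"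
    proof (rule tendsto_sandwich[OF _ _ tendsto_const lim0])
      show "eventually (\<lambda>m. 0 \<le> Tm y (c + real m) k) sequentially"
        using c by (intro always_eventually allI Tm_nonneg) simp
      show "eventually (\<lambda>m. Tm y (c + real m) k \<le> P / (c + real m)) sequentially"
        using ev by eventually_elim (rule up)
    qed
    then show ?thesis using Suc by simp
  qed
  show ?thesis by (intro tendsto_sum t)
qed


lemma Tm_sum_bound:
  assumes c: "c > 1/2"
  shows "(\<Sum>k<n. Tm y c k) \<le> exp (y^2 / (c - 1/2))"
proof -
  define B where "B = exp (y^2 / (c - 1/2))"
  define L where "L = (\<Sum>k<n. if k = 0 then 1 else (0::real))"
  have c0: "c > 0" using c by simp
  have L: "L \<le> 1" unfolding L_def by (cases n) (auto simp: sum.delta)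
  have le: "(\<Sum>k<n. Tm y c k) \<le> B * (\<Sum>k<n. Tm y (c + real m) k)" for m
  proof -
    have nn: "0 \<le> (\<Sum>k<n. Tm y (c + real m) k)" using c0 by (intro sum_nonneg Tm_nonneg) simp
    have "(\<Sum>k<n. Tm y c k) \<le> (\<Prod>i<m. 1 + y^2 / (c + real i)^2) * (\<Sum>k<n. Tm y (c + real m) k)"
      by (rule Tm_iter[OF c0])
    also have "\<dots> \<le> B * (\<Sum>k<n. Tm y (c + real m) k)"
      unfolding B_def by (intro mult_right_mono prod_le_exp[OF c] nn)
    finally show ?thesis .
  qed
  have lim: "(\<lambda>m. B * (\<Sum>k<n. Tm y (c + real m) k)) \<longlonglongrightarrow> B * L"
    unfolding L_def by (intro tendsto_mult tendsto_const Tm_lim[OF c0])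
  have "(\<Sum>k<n. Tm y c k) \<le> B * L"
    by (rule LIMSEQ_le_const[OF lim]) (use le in blast)
  also have "\<dots> \<le> B" using L unfolding B_def by simp
  finally show ?thesis unfolding B_def .
qed




lemma not_nonpos_Int_pos: "(a::real) > 0 \<Longrightarrow> a \<notin> \<int>\<^sub>\<le>\<^sub>0"
  by (auto elim!: nonpos_Ints_cases)

lemma beta_const:
  assumes a: "a > 0"
  shows "a * Beta (real k + 1) a = fact k / pochhammer (a + 1) k"
proof -
  have g1: "Gamma (real k + 1) = fact k" using Gamma_fact[of k] by (simp add: add.commute)
  have g2: "Gamma (a + 1) = a * Gamma a" using Gamma_plus1[OF not_nonpos_Int_pos[OF a]] .
  have a1: "a + 1 > 0" using a by simp
  have g3: "pochhammer (a + 1) k = Gamma (a + 1 + real k) / Gamma (a + 1)"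
    using pochhammer_Gamma[OF not_nonpos_Int_pos[OF a1]] by simp
  have pos: "Gamma a > 0" "Gamma (a + 1 + real k) > 0" using a by auto
  have "a * Beta (real k + 1) a = a * (fact k * Gamma a / Gamma (real k + 1 + a))"
    by (simp add: Beta_def g1)
  also have "\<dots> = fact k / pochhammer (a + 1) k"
    unfolding g3 g2 using pos a by (simp add: field_simps add_ac)
  finally show ?thesis .
qed

lemma beta_moment:
  assumes a: "a > 0"
  shows "(\<integral>\<^sup>+x. ennreal (indicator {0..1} x * a * (1 - x) powr (a - 1)) * ennreal (x ^ k) \<partial>lborel)
     = ennreal (fact k / pochhammer (a + 1) k)"
proof -
  have k1: "real k + 1 > 0" by simp
  have hB: "((\<lambda>t. t powr (real k + 1 - 1) * (1 - t) powr (a - 1)) has_integral Beta (real k + 1) a) {0..1}"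
    by (rule has_integral_Beta_real[OF k1 a])
  then have "((\<lambda>t. t powr (real k + 1 - 1) * (1 - t) powr (a - 1)) has_integral Beta (real k + 1) a) {0<..<1}"
    by (simp add: has_integral_Icc_iff_Ioo)
  then have "((\<lambda>t. t ^ k * (1 - t) powr (a - 1)) has_integral Beta (real k + 1) a) {0<..<1}"
    by (rule has_integral_cong[THEN iffD1, rotated]) (auto simp: powr_realpow)
  then have "((\<lambda>t. t ^ k * (1 - t) powr (a - 1)) has_integral Beta (real k + 1) a) {0..1}"
    by (simp add: has_integral_Icc_iff_Ioo)
  then have hI: "((\<lambda>t. a * (t ^ k * (1 - t) powr (a - 1))) has_integral a * Beta (real k + 1) a) {0..1}"
    by (rule has_integral_mult_right)
  have "(\<integral>\<^sup>+x. ennreal (a * (x ^ k * (1 - x) powr (a - 1))) * indicator {0..1} x \<partial>lborel) = ennreal (a * Beta (real k + 1) a)"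
    by (rule nn_integral_has_integral_lebesgue'[OF _ hI]) (use a in auto)
  moreover have "(\<integral>\<^sup>+x. ennreal (indicator {0..1} x * a * (1 - x) powr (a - 1)) * ennreal (x ^ k) \<partial>lborel)
      = (\<integral>\<^sup>+x. ennreal (a * (x ^ k * (1 - x) powr (a - 1))) * indicator {0..1} x \<partial>lborel)"
  proof (rule nn_integral_cong)
    fix x :: real
    show "ennreal (indicator {0..1} x * a * (1 - x) powr (a - 1)) * ennreal (x ^ k) =
          ennreal (a * (x ^ k * (1 - x) powr (a - 1))) * indicator {0..1} x"
    proof (cases "x \<in> {0..1}")
      case True
      then have "x ^ k \<ge> 0" by simp
      then show ?thesis using True a by (simp add: ennreal_mult'[symmetric] mult_ac)
    qed simp
  qed
  ultimately show ?thesis using beta_const[OF a, of k] by simp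
qed




definition bco :: "real \<Rightarrow> nat \<Rightarrow> complex" where
  "bco l k = ((\<i> * complex_of_real l) gchoose k) * (-1)^k"

definition fN :: "real \<Rightarrow> nat \<Rightarrow> complex \<Rightarrow> complex" where
  "fN l N z = (\<Sum>k<N. bco l k * z ^ k)"

lemma bco_norm_sq: "(cmod (bco l k))^2 = (\<Prod>m<k. (real m)^2 + l^2) / (fact k)^2"
proof -
  have "(\<i> * complex_of_real l) gchoose k = (\<Prod>i=0..<k. \<i> * complex_of_real l - of_nat i) / fact k"
    by (rule gbinomial_prod_rev)
  then have "cmod (bco l k) = (\<Prod>i<k. cmod (\<i> * complex_of_real l - of_nat i)) / fact k"
    by (simp add: bco_def norm_mult norm_divide prod_norm[symmetric] atLeast0LessThan norm_power)
  moreover have "(cmod (\<i> * complex_of_real l - of_nat i))^2 = (real i)^2 + l^2" for i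
    by (simp add: cmod_power2)
  ultimately show ?thesis by (simp add: power_divide prod_power_distrib)
qed

lemma fN_lim:
  assumes "cmod z < 1"
  shows "(\<lambda>N. fN l N z) \<longlonglongrightarrow> (1 - z) powr (\<i> * complex_of_real l)"
proof -
  have "norm (-z) < 1" using assms by simp
  from gen_binomial_complex[OF this, of "\<i> * complex_of_real l"]
  have "(\<lambda>n. ((\<i> * complex_of_real l) gchoose n) * (-z)^n) sums (1 - z) powr (\<i> * complex_of_real l)"
    by simp
  moreover have "((\<i> * complex_of_real l) gchoose n) * (-z)^n = bco l n * z ^ n" for n
  proof -
    have "(-z)^n = (-1)^n * z^n" by (rule power_minus)
    then show ?thesis unfolding bco_def by (simp only: ac_simps)
  qed
  ultimately show ?thesis by (simp add: sums_def fN_def)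
qed

lemma powr_norm_sq:
  assumes "cmod z < 1"
  shows "(cmod ((1 - z) powr (\<i> * complex_of_real l)))^2 = exp (l * (-2 * Im (Ln (1 - z))))"
proof -
  have "1 - z \<noteq> 0" using assms by auto
  then have "(1 - z) powr (\<i> * complex_of_real l) = exp (\<i> * complex_of_real l * Ln (1 - z))"
    by (simp add: powr_def)
  then have "cmod ((1 - z) powr (\<i> * complex_of_real l)) = exp (- l * Im (Ln (1 - z)))"
    by simp
  then show ?thesis by (simp add: power2_eq_square exp_add[symmetric])
qed




lemma cnj_measurable[measurable]: "cnj \<in> borel_measurable borel"
  by (intro borel_measurable_continuous_onI continuous_intros)

context prob_space
begin

lemma rot_orth:
  fixes Z :: "'a \<Rightarrow> complex"
  assumes Zm[measurable]: "Z \<in> borel_measurable M"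
    and rot: "\<And>c. cmod c = 1 \<Longrightarrow> distr M borel (\<lambda>\<omega>. c * Z \<omega>) = distr M borel Z"
    and km: "k \<noteq> m"
  shows "(\<integral>\<omega>. Z \<omega> ^ k * cnj (Z \<omega>) ^ m \<partial>M) = 0"
proof -
  define \<phi> where "\<phi> = pi / (real k - real m)"
  define c where "c = cis \<phi>"
  have c1: "cmod c = 1" by (simp add: c_def)
  have nz: "real k - real m \<noteq> 0" using km by simp
  have cc: "c ^ k * cnj c ^ m = -1"
  proof -
    have "c ^ k * cnj c ^ m = cis (real k * \<phi>) * cis (real m * (-\<phi>))"
      unfolding c_def cis_cnj Complex.DeMoivre by simp
    also have "\<dots> = cis ((real k - real m) * \<phi>)" by (simp add: cis_mult algebra_simps)
    also have "(real k - real m) * \<phi> = pi" using nz by (simp add: \<phi>_def)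
    finally show ?thesis by simp
  qed
  define h where "h z = z ^ k * cnj z ^ m" for z :: complex
  have hm[measurable]: "h \<in> borel_measurable borel" unfolding h_def by measurable
  have "(\<integral>\<omega>. h (Z \<omega>) \<partial>M) = (\<integral>z. h z \<partial>distr M borel Z)"
    by (rule integral_distr[symmetric]) auto
  also have "\<dots> = (\<integral>z. h z \<partial>distr M borel (\<lambda>\<omega>. c * Z \<omega>))" using rot[OF c1] by simp
  also have "\<dots> = (\<integral>\<omega>. h (c * Z \<omega>) \<partial>M)"
    by (rule integral_distr) auto
  also have "\<dots> = (\<integral>\<omega>. (c ^ k * cnj c ^ m) * h (Z \<omega>) \<partial>M)"
    by (simp add: h_def power_mult_distrib mult_ac)
  also have "\<dots> = - (\<integral>\<omega>. h (Z \<omega>) \<partial>M)" by (simp add: cc)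
  finally show ?thesis unfolding h_def by simp
qed

lemma law_AE_lt1:
  fixes Z :: "'a \<Rightarrow> complex"
  assumes Zm[measurable]: "Z \<in> borel_measurable M"
    and law: "distributed M lborel (\<lambda>\<omega>. (cmod (Z \<omega>))^2) (\<lambda>x. ennreal (indicator {0..1} x * a * (1 - x) powr (a - 1)))"
  shows "AE \<omega> in M. cmod (Z \<omega>) < 1"
proof -
  have fm: "(\<lambda>x. ennreal (indicator {0..1} x * a * (1 - x) powr (a - 1))) \<in> borel_measurable lborel"
    using law by (simp add: distributed_def)
  have d: "distr M lborel (\<lambda>\<omega>. (cmod (Z \<omega>))^2) = density lborel (\<lambda>x. ennreal (indicator {0..1} x * a * (1 - x) powr (a - 1)))"
    using law by (simp add: distributed_def)
  have "AE x in density lborel (\<lambda>x. ennreal (indicator {0..1} x * a * (1 - x) powr (a - 1))). x < 1"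
  proof (subst AE_density[OF fm], rule AE_I2, rule impI)
    fix x :: real
    assume "0 < ennreal (indicator {0..1} x * a * (1 - x) powr (a - 1))"
    then have p: "indicator {0..1} x * a * (1 - x) powr (a - 1) > 0" by simp
    then have "x \<in> {0..1}" by (cases "x \<in> {0..1}") auto
    moreover have "x \<noteq> 1" using p by auto
    ultimately show "x < 1" by auto
  qed
  then have "AE x in distr M lborel (\<lambda>\<omega>. (cmod (Z \<omega>))^2). x < 1" unfolding d .
  then have "AE \<omega> in M. (cmod (Z \<omega>))^2 < 1"
    by (subst (asm) AE_distr_iff) auto
  then show ?thesis
    by eventually_elim (simp add: power_less_one_iff abs_square_less_1)
qed

lemma law_moment:
  fixes Z :: "'a \<Rightarrow> complex"
  assumes Zm[measurable]: "Z \<in> borel_measurable M"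
    and law: "distributed M lborel (\<lambda>\<omega>. (cmod (Z \<omega>))^2) (\<lambda>x. ennreal (indicator {0..1} x * a * (1 - x) powr (a - 1)))"
    and a: "a > 0"
  shows "(\<integral>\<omega>. Z \<omega> ^ k * cnj (Z \<omega>) ^ k \<partial>M) = complex_of_real (fact k / pochhammer (a + 1) k)"
proof -
  have lt: "AE \<omega> in M. cmod (Z \<omega>) < 1" by (rule law_AE_lt1[OF Zm law])
  have int: "integrable M (\<lambda>\<omega>. ((cmod (Z \<omega>))^2) ^ k)"
  proof (rule integrable_const_bound[where B=1])
    show "AE \<omega> in M. norm (((cmod (Z \<omega>))^2) ^ k) \<le> 1"
      using lt by eventually_elim (simp add: power_le_one abs_square_le_1 norm_power)
  qed measurable
  have "(\<integral>\<^sup>+x. ennreal (indicator {0..1} x * a * (1 - x) powr (a - 1)) * ennreal (x ^ k) \<partial>lborel)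
      = (\<integral>\<^sup>+\<omega>. ennreal (((cmod (Z \<omega>))^2) ^ k) \<partial>M)"
    by (rule distributed_nn_integral[OF law]) measurable
  also have "\<dots> = ennreal (\<integral>\<omega>. ((cmod (Z \<omega>))^2) ^ k \<partial>M)"
    by (rule nn_integral_eq_integral[OF int]) simp
  finally have "ennreal (\<integral>\<omega>. ((cmod (Z \<omega>))^2) ^ k \<partial>M) = ennreal (fact k / pochhammer (a + 1) k)"
    using beta_moment[OF a, of k] by simp
  moreover have "(\<integral>\<omega>. ((cmod (Z \<omega>))^2) ^ k \<partial>M) \<ge> 0" by simp
  moreover have "fact k / pochhammer (a + 1) k \<ge> 0" using pochhammer_pos_real[of "a + 1" k] a by simp
  ultimately have e: "(\<integral>\<omega>. ((cmod (Z \<omega>))^2) ^ k \<partial>M) = fact k / pochhammer (a + 1) k"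
    by simp
  have "Z \<omega> ^ k * cnj (Z \<omega>) ^ k = complex_of_real (((cmod (Z \<omega>))^2) ^ k)" for \<omega>
  proof -
    have "Z \<omega> ^ k * cnj (Z \<omega>) ^ k = (Z \<omega> * cnj (Z \<omega>)) ^ k" by (simp add: power_mult_distrib)
    also have "\<dots> = (complex_of_real ((cmod (Z \<omega>))^2)) ^ k" by (simp only: complex_norm_square)
    finally show ?thesis by (simp only: of_real_power)
  qed
  then have "(\<integral>\<omega>. Z \<omega> ^ k * cnj (Z \<omega>) ^ k \<partial>M) = (\<integral>\<omega>. complex_of_real (((cmod (Z \<omega>))^2) ^ k) \<partial>M)"
    by (simp only:)
  also have "\<dots> = complex_of_real (\<integral>\<omega>. ((cmod (Z \<omega>))^2) ^ k \<partial>M)"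
    by (rule integral_complex_of_real)
  finally have "(\<integral>\<omega>. Z \<omega> ^ k * cnj (Z \<omega>) ^ k \<partial>M) = complex_of_real (\<integral>\<omega>. ((cmod (Z \<omega>))^2) ^ k \<partial>M)" .
  then show ?thesis using e by simp
qed

end




lemma bco_Tm: "(cmod (bco l k))^2 * (fact k / pochhammer c k) = Tm l c k"
proof -
  define P where "P = (\<Prod>m<k. (real m)^2 + l^2)"
  define p where "p = pochhammer c k"
  have f: "(fact k :: real) \<noteq> 0" by simp
  have "P / (fact k)^2 * (fact k / p) = P / (fact k * p)"
    using f by (simp add: power2_eq_square)
  then show ?thesis unfolding bco_norm_sq Tm_def P_def p_def .
qed

context prob_space
begin

lemma fN_sq_integral:
  fixes Z :: "'a \<Rightarrow> complex"
  assumes Zm[measurable]: "Z \<in> borel_measurable M"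
    and rot: "\<And>c. cmod c = 1 \<Longrightarrow> distr M borel (\<lambda>\<omega>. c * Z \<omega>) = distr M borel Z"
    and law: "distributed M lborel (\<lambda>\<omega>. (cmod (Z \<omega>))^2) (\<lambda>x. ennreal (indicator {0..1} x * a * (1 - x) powr (a - 1)))"
    and a: "a > 0"
  shows "(\<integral>\<omega>. (cmod (fN l N (Z \<omega>)))^2 \<partial>M) = (\<Sum>k<N. Tm l (a + 1) k)"
proof -
  have lt: "AE \<omega> in M. cmod (Z \<omega>) < 1" by (rule law_AE_lt1[OF Zm law])
  have int: "integrable M (\<lambda>\<omega>. Z \<omega> ^ k * cnj (Z \<omega>) ^ m)" for k m
  proof (rule integrable_const_bound[where B=1])
    show "AE \<omega> in M. norm (Z \<omega> ^ k * cnj (Z \<omega>) ^ m) \<le> 1"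
      using lt by eventually_elim (simp add: norm_mult norm_power power_le_one mult_le_one)
  qed measurable
  define b where "b = bco l"
  have e1: "complex_of_real ((cmod (fN l N (Z \<omega>)))^2) =
      (\<Sum>k<N. \<Sum>m<N. (b k * cnj (b m)) * (Z \<omega> ^ k * cnj (Z \<omega>) ^ m))" for \<omega>
  proof -
    have "complex_of_real ((cmod (fN l N (Z \<omega>)))^2) = fN l N (Z \<omega>) * cnj (fN l N (Z \<omega>))"
      by (rule complex_norm_square)
    also have "\<dots> = (\<Sum>k<N. b k * Z \<omega> ^ k) * (\<Sum>m<N. cnj (b m) * cnj (Z \<omega>) ^ m)"
      by (simp add: fN_def b_def cnj_sum)
    also have "\<dots> = (\<Sum>k<N. \<Sum>m<N. (b k * Z \<omega> ^ k) * (cnj (b m) * cnj (Z \<omega>) ^ m))"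
      by (rule sum_product)
    also have "\<dots> = (\<Sum>k<N. \<Sum>m<N. (b k * cnj (b m)) * (Z \<omega> ^ k * cnj (Z \<omega>) ^ m))"
      by (simp add: mult_ac)
    finally show ?thesis .
  qed
  have "complex_of_real (\<integral>\<omega>. (cmod (fN l N (Z \<omega>)))^2 \<partial>M)
      = (\<integral>\<omega>. complex_of_real ((cmod (fN l N (Z \<omega>)))^2) \<partial>M)"
    by (rule integral_complex_of_real[symmetric])
  also have "\<dots> = (\<integral>\<omega>. (\<Sum>k<N. \<Sum>m<N. (b k * cnj (b m)) * (Z \<omega> ^ k * cnj (Z \<omega>) ^ m)) \<partial>M)"
    by (simp only: e1)
  also have "\<dots> = (\<Sum>k<N. \<Sum>m<N. (b k * cnj (b m)) * (\<integral>\<omega>. Z \<omega> ^ k * cnj (Z \<omega>) ^ m \<partial>M))"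
    using int by (simp add: integral_sum)
  also have "\<dots> = (\<Sum>k<N. \<Sum>m<N. if m = k then (b k * cnj (b k)) * complex_of_real (fact k / pochhammer (a + 1) k) else 0)"
    by (intro sum.cong refl) (auto simp: law_moment[OF Zm law a] rot_orth[OF Zm rot])
  also have "\<dots> = (\<Sum>k<N. (b k * cnj (b k)) * complex_of_real (fact k / pochhammer (a + 1) k))"
    by (simp add: sum.delta)
  also have "\<dots> = (\<Sum>k<N. complex_of_real (Tm l (a + 1) k))"
  proof (intro sum.cong refl)
    fix k
    have "b k * cnj (b k) = complex_of_real ((cmod (b k))^2)" by (rule complex_norm_square[symmetric])
    then show "(b k * cnj (b k)) * complex_of_real (fact k / pochhammer (a + 1) k) = complex_of_real (Tm l (a + 1) k)"
      unfolding b_def by (simp only: of_real_mult[symmetric] bco_Tm)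
  qed
  also have "\<dots> = complex_of_real (\<Sum>k<N. Tm l (a + 1) k)" by simp
  finally show ?thesis by (simp only: of_real_eq_iff)
qed

end



lemma fN_measurable[measurable]: "fN l N \<in> borel_measurable borel"
  unfolding fN_def by measurable

context prob_space
begin

lemma mgf_bound:
  fixes Z :: "'a \<Rightarrow> complex"
  assumes Zm[measurable]: "Z \<in> borel_measurable M"
    and rot: "\<And>c. cmod c = 1 \<Longrightarrow> distr M borel (\<lambda>\<omega>. c * Z \<omega>) = distr M borel Z"
    and law: "distributed M lborel (\<lambda>\<omega>. (cmod (Z \<omega>))^2) (\<lambda>x. ennreal (indicator {0..1} x * a * (1 - x) powr (a - 1)))"
    and a: "a > 0"
  shows "(\<integral>\<omega>. exp (l * (-2 * Im (Ln (1 - Z \<omega>)))) \<partial>M) \<le> exp (l^2 / (a + 1/2))"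
proof -
  define G where "G \<omega> = exp (l * (-2 * Im (Ln (1 - Z \<omega>))))" for \<omega>
  define u where "u N \<omega> = ennreal ((cmod (fN l N (Z \<omega>)))^2)" for N \<omega>
  define B where "B = exp (l^2 / (a + 1/2))"
  have Gm[measurable]: "G \<in> borel_measurable M" unfolding G_def by measurable
  have um[measurable]: "u N \<in> borel_measurable M" for N unfolding u_def by measurable
  have lt: "AE \<omega> in M. cmod (Z \<omega>) < 1" by (rule law_AE_lt1[OF Zm law])
  have lim: "AE \<omega> in M. liminf (\<lambda>N. u N \<omega>) = ennreal (G \<omega>)"
    using lt
  proof eventually_elim
    case (elim \<omega>)
    have "(\<lambda>N. fN l N (Z \<omega>)) \<longlonglongrightarrow> (1 - Z \<omega>) powr (\<i> * complex_of_real l)"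
      by (rule fN_lim[OF elim])
    then have "(\<lambda>N. (cmod (fN l N (Z \<omega>)))^2) \<longlonglongrightarrow> (cmod ((1 - Z \<omega>) powr (\<i> * complex_of_real l)))^2"
      by (intro tendsto_intros)
    then have "(\<lambda>N. u N \<omega>) \<longlonglongrightarrow> ennreal (G \<omega>)"
      unfolding u_def G_def powr_norm_sq[OF elim] by (rule tendsto_ennrealI)
    then show ?case by (rule lim_imp_Liminf[rotated]) simp
  qed
  have bnd: "integral\<^sup>N M (u N) \<le> ennreal B" for N
  proof -
    define C where "C = (\<Sum>k<N. cmod (bco l k))"
    have int: "integrable M (\<lambda>\<omega>. (cmod (fN l N (Z \<omega>)))^2)"
    proof (rule integrable_const_bound[where B="C^2"])
      show "AE \<omega> in M. norm ((cmod (fN l N (Z \<omega>)))^2) \<le> C^2"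
        using lt
      proof eventually_elim
        case (elim \<omega>)
        have "cmod (fN l N (Z \<omega>)) \<le> (\<Sum>k<N. cmod (bco l k * Z \<omega> ^ k))"
          unfolding fN_def by (rule norm_sum)
        also have "\<dots> \<le> C" unfolding C_def
        proof (rule sum_mono)
          fix k
          have "cmod (Z \<omega> ^ k) \<le> 1" using elim by (simp add: norm_power power_le_one)
          then show "cmod (bco l k * Z \<omega> ^ k) \<le> cmod (bco l k)"
            by (simp add: norm_mult mult_left_le)
        qed
        finally show ?case by (simp add: power_mono)
      qed
    qed measurable
    have "integral\<^sup>N M (u N) = ennreal (\<integral>\<omega>. (cmod (fN l N (Z \<omega>)))^2 \<partial>M)"
      unfolding u_def by (rule nn_integral_eq_integral[OF int]) simp
    also have "\<dots> = ennreal (\<Sum>k<N. Tm l (a + 1) k)"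
      by (simp only: fN_sq_integral[OF Zm rot law a])
    also have "\<dots> \<le> ennreal B"
    proof (rule ennreal_leI)
      have "a + 1 > 1/2" using a by simp
      from Tm_sum_bound[OF this, where n=N and y=l] show "(\<Sum>k<N. Tm l (a + 1) k) \<le> B"
        unfolding B_def by (simp add: algebra_simps)
    qed
    finally show ?thesis .
  qed
  have "(\<integral>\<^sup>+\<omega>. ennreal (G \<omega>) \<partial>M) = (\<integral>\<^sup>+\<omega>. liminf (\<lambda>N. u N \<omega>) \<partial>M)"
    using lim by (intro nn_integral_cong_AE) (auto elim: eventually_mono)
  also have "\<dots> \<le> liminf (\<lambda>N. integral\<^sup>N M (u N))"
    by (rule nn_integral_liminf) simp
  also have "\<dots> \<le> liminf (\<lambda>N. ennreal B)"
    by (rule Liminf_mono) (simp add: bnd)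
  also have "\<dots> = ennreal B" by (simp add: Liminf_const)
  finally have le: "(\<integral>\<^sup>+\<omega>. ennreal (G \<omega>) \<partial>M) \<le> ennreal B" .
  have "(\<integral>\<omega>. G \<omega> \<partial>M) = enn2real (\<integral>\<^sup>+\<omega>. ennreal (G \<omega>) \<partial>M)"
    by (rule integral_eq_nn_integral) (auto simp: G_def)
  also have "\<dots> \<le> enn2real (ennreal B)"
    by (rule enn2real_mono[OF le]) simp
  also have "\<dots> = B" by (simp add: B_def)
  finally show ?thesis unfolding G_def B_def .
qed

end



definition PsiW :: "(nat \<Rightarrow> 'w \<Rightarrow> complex) \<Rightarrow> real \<Rightarrow> nat \<Rightarrow> 'w \<Rightarrow> real" where
  "PsiW \<alpha> \<theta> r \<omega> = Psi (\<lambda>r. \<alpha> r \<omega>) r \<theta>"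

definition gfun :: "complex \<Rightarrow> real" where
  "gfun z = -2 * Im (Ln (1 - z))"

lemma gfun_measurable[measurable]: "gfun \<in> borel_measurable borel"
  unfolding gfun_def by measurable

lemma gfun_bound: "\<bar>gfun z\<bar> \<le> 2 * (pi + \<bar>Im (Ln 0)\<bar>)"
proof (cases "1 - z = 0")
  case True
  then have "z = 1" by simp
  have "\<bar>gfun z\<bar> = 2 * \<bar>Im (Ln 0)\<bar>" using \<open>z = 1\<close> by (simp add: gfun_def abs_mult)
  then show ?thesis using pi_ge_zero by (simp add: algebra_simps)
next
  case False
  have "\<bar>Im (Ln (1 - z))\<bar> \<le> pi" using mpi_less_Im_Ln[OF False] Im_Ln_le_pi[OF False] by auto
  then show ?thesis by (simp add: gfun_def)
qed

lemma Psi_Suc: "Psi a (Suc n) \<theta> = Psi a n \<theta> + \<theta> - 2 * Im (Ln (1 - a n * exp (\<i> * complex_of_real (Psi a n \<theta>))))"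
proof -
  define f where "f r = Im (Ln (1 - a r * exp (\<i> * complex_of_real (Psi a r \<theta>))))" for r
  have e1: "Psi a (Suc n) \<theta> = real (Suc n + 1) * \<theta> - 2 * (\<Sum>r\<in>{..<Suc n}. f r)"
    unfolding f_def by (rule Psi.simps)
  have e2: "Psi a n \<theta> = real (n + 1) * \<theta> - 2 * (\<Sum>r\<in>{..<n}. f r)"
    unfolding f_def by (rule Psi.simps)
  have e3: "(\<Sum>r\<in>{..<Suc n}. f r) = (\<Sum>r\<in>{..<n}. f r) + f n" by (rule sum.lessThan_Suc)
  have e4: "real (Suc n + 1) * \<theta> = real (n + 1) * \<theta> + \<theta>" by (simp add: algebra_simps)
  have "Psi a (Suc n) \<theta> = Psi a n \<theta> + \<theta> - 2 * f n"
    using e1 e2 e3 e4 by linarith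
  then show ?thesis unfolding f_def .
qed

lemma PsiW_Suc: "PsiW \<alpha> \<theta> (Suc n) \<omega> = PsiW \<alpha> \<theta> n \<omega> + \<theta> + gfun (\<alpha> n \<omega> * exp (\<i> * complex_of_real (PsiW \<alpha> \<theta> n \<omega>)))"
  unfolding PsiW_def gfun_def Psi_Suc by simp

lemma PsiW_incr: "PsiW \<alpha> \<theta> (j + m) \<omega> - PsiW \<alpha> \<theta> j \<omega> - real m * \<theta>
   = (\<Sum>i<m. gfun (\<alpha> (j + i) \<omega> * exp (\<i> * complex_of_real (PsiW \<alpha> \<theta> (j + i) \<omega>))))"
  by (induction m) (simp_all add: PsiW_Suc algebra_simps)

definition genr :: "'w measure \<Rightarrow> (nat \<Rightarrow> 'w \<Rightarrow> complex) \<Rightarrow> nat \<Rightarrow> 'w set set" where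
  "genr M \<alpha> i = {(\<alpha> i) -` A \<inter> space M | A. A \<in> sets (borel :: complex measure)}"

lemma filt_alt: "filt M \<alpha> j = sigma (space M) (\<Union>r\<in>{..<j}. genr M \<alpha> r)"
  unfolding filt_def genr_def ..

lemma genr_Pow: "(\<Union>r\<in>I. genr M \<alpha> r) \<subseteq> Pow (space M)"
  unfolding genr_def by auto

lemma space_filt[simp]: "space (filt M \<alpha> j) = space M"
  unfolding filt_alt by (rule space_measure_of[OF genr_Pow])

lemma sets_filt: "sets (filt M \<alpha> j) = sigma_sets (space M) (\<Union>r\<in>{..<j}. genr M \<alpha> r)"
  unfolding filt_alt by (rule sets_measure_of[OF genr_Pow])

lemma filt_mono: "j \<le> k \<Longrightarrow> sets (filt M \<alpha> j) \<subseteq> sets (filt M \<alpha> k)"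
  unfolding sets_filt by (rule sigma_sets_mono') (fastforce intro: order_less_le_trans)

lemma alpha_filt_measurable: "i < j \<Longrightarrow> \<alpha> i \<in> borel_measurable (filt M \<alpha> j)"
proof (rule measurableI)
  fix A :: "complex set" assume "i < j" "A \<in> sets borel"
  then have "\<alpha> i -` A \<inter> space M \<in> (\<Union>r\<in>{..<j}. genr M \<alpha> r)" unfolding genr_def by blast
  then show "\<alpha> i -` A \<inter> space (filt M \<alpha> j) \<in> sets (filt M \<alpha> j)"
    unfolding sets_filt by auto
qed auto

lemma measurable_filt_mono:
  assumes "j \<le> k" "f \<in> measurable (filt M \<alpha> j) N"
  shows "f \<in> measurable (filt M \<alpha> k) N"
  using assms filt_mono[OF assms(1), of M \<alpha>] by (auto simp: measurable_def)

lemma PsiW_filt_measurable: "PsiW \<alpha> \<theta> r \<in> borel_measurable (filt M \<alpha> r)"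
proof (induction r rule: less_induct)
  case (less r)
  have eq: "PsiW \<alpha> \<theta> r = (\<lambda>\<omega>. real (r + 1) * \<theta>
      - 2 * (\<Sum>k\<in>{..<r}. Im (Ln (1 - \<alpha> k \<omega> * exp (\<i> * complex_of_real (PsiW \<alpha> \<theta> k \<omega>))))))"
    by (rule ext) (simp add: PsiW_def Psi.simps[of _ r])
  show ?case unfolding eq
  proof (intro borel_measurable_diff borel_measurable_const borel_measurable_times borel_measurable_sum)
    fix k assume k: "k \<in> {..<r}"
    have [measurable]: "\<alpha> k \<in> borel_measurable (filt M \<alpha> r)" using k by (intro alpha_filt_measurable) auto
    have [measurable]: "PsiW \<alpha> \<theta> k \<in> borel_measurable (filt M \<alpha> r)"
      using k by (intro measurable_filt_mono[OF _ less]) auto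
    show "(\<lambda>\<omega>. Im (Ln (1 - \<alpha> k \<omega> * exp (\<i> * complex_of_real (PsiW \<alpha> \<theta> k \<omega>))))) \<in> borel_measurable (filt M \<alpha> r)"
      by measurable
  qed
qed




lemma complex_Re_Im_eq: "complex_of_real (Re z) + \<i> * complex_of_real (Im z) = z"
  by (simp add: complex_eq_iff)

lemma Int_stable_genr: "Int_stable (genr M \<alpha> i)"
  unfolding Int_stable_def genr_def
  apply auto
  apply (rule_tac x="A \<inter> Aa" in exI)
  apply auto
  done

context prob_space
begin

lemma subalg_filt:
  assumes am: "\<And>i. \<alpha> i \<in> borel_measurable M"
  shows "subalgebra M (filt M \<alpha> j)"
  unfolding subalgebra_def
proof
  show "space (filt M \<alpha> j) = space M" by simp
  have "(\<Union>r\<in>{..<j}. genr M \<alpha> r) \<subseteq> sets M"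
    unfolding genr_def using am by (auto intro: measurable_sets)
  then show "sets (filt M \<alpha> j) \<subseteq> sets M"
    unfolding sets_filt by (rule sets.sigma_sets_subset)
qed

lemma indep_block:
  assumes indep: "indep_vars (\<lambda>_. borel) \<alpha> UNIV"
  shows "indep_sets (\<lambda>b. sigma_sets (space M) (\<Union>i\<in>(if b then {..<r} else {r}). genr M \<alpha> i)) UNIV"
proof (rule indep_sets_collect_sigma)
  have "indep_sets (genr M \<alpha>) UNIV"
    using indep unfolding indep_vars_def2 genr_def by simp
  then show "indep_sets (genr M \<alpha>) (\<Union>b\<in>UNIV. if b then {..<r} else {r})"
    by (rule indep_sets_mono_index[rotated]) simp
  show "Int_stable (genr M \<alpha> i)" for i by (rule Int_stable_genr)
  show "disjoint_family_on (\<lambda>b. if b then {..<r} else {r}) UNIV"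
    unfolding disjoint_family_on_def by auto
qed

definition cpair :: "complex \<Rightarrow> real \<times> real" where
  "cpair z = (Re z, Im z)"

lemma cpair_measurable[measurable]: "cpair \<in> borel_measurable borel"
  unfolding cpair_def by measurable

lemma indep_var_filt:
  assumes indep: "indep_vars (\<lambda>_. borel) \<alpha> UNIV"
    and Vm: "V \<in> measurable (filt M \<alpha> r) (borel :: (real \<times> real) measure)"
  shows "indep_var borel V borel (\<lambda>\<omega>. cpair (\<alpha> r \<omega>))"
proof -
  have am[measurable]: "\<alpha> i \<in> borel_measurable M" for i using indep unfolding indep_vars_def2 by auto
  have Vm': "V \<in> measurable M borel" by (rule measurable_from_subalg[OF subalg_filt[OF am] Vm])
  have ind: "indep_sets (\<lambda>b. {case_bool V (\<lambda>\<omega>. cpair (\<alpha> r \<omega>)) b -` A \<inter> space M | A. A \<in> sets (case_bool (borel :: (real \<times> real) measure) borel b)}) UNIV"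
  proof (rule indep_sets_mono_sets[OF indep_block[OF indep, of r]])
    fix b :: bool
    show "{case_bool V (\<lambda>\<omega>. cpair (\<alpha> r \<omega>)) b -` A \<inter> space M | A. A \<in> sets (case_bool (borel :: (real \<times> real) measure) borel b)}
        \<subseteq> sigma_sets (space M) (\<Union>i\<in>(if b then {..<r} else {r}). genr M \<alpha> i)"
    proof (cases b)
      case True
      have "V -` A \<inter> space M \<in> sets (filt M \<alpha> r)" if "A \<in> sets borel" for A
        using measurable_sets[OF Vm that] by simp
      then show ?thesis using True by (auto simp: sets_filt)
    next
      case False
      have "(\<lambda>\<omega>. cpair (\<alpha> r \<omega>)) -` A \<inter> space M \<in> genr M \<alpha> r" if "A \<in> sets borel" for A
      proof -
        have "cpair -` A \<in> sets borel" using measurable_sets[OF cpair_measurable that] by simp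
        moreover have "(\<lambda>\<omega>. cpair (\<alpha> r \<omega>)) -` A \<inter> space M = \<alpha> r -` (cpair -` A) \<inter> space M" by auto
        ultimately show ?thesis unfolding genr_def by blast
      qed
      then show ?thesis using False by (auto intro: sigma_sets.Basic)
    qed
  qed
  show ?thesis unfolding indep_var_def indep_vars_def2
    using ind Vm' am by (auto split: bool.split)
qed

lemma indep_integral:
  fixes W \<Phi> :: "'a \<Rightarrow> real" and h :: "complex \<Rightarrow> real"
  assumes indep: "indep_vars (\<lambda>_. borel) \<alpha> UNIV"
    and rot_inv: "\<And>c. cmod c = 1 \<Longrightarrow> distr M borel (\<lambda>\<omega>. c * \<alpha> r \<omega>) = distr M borel (\<alpha> r)"
    and Wm: "W \<in> borel_measurable (filt M \<alpha> r)"
    and Phim: "\<Phi> \<in> borel_measurable (filt M \<alpha> r)"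
    and Wb: "\<And>\<omega>. \<omega> \<in> space M \<Longrightarrow> \<bar>W \<omega>\<bar> \<le> BW"
    and hm[measurable]: "h \<in> borel_measurable borel"
    and hb: "\<And>z. \<bar>h z\<bar> \<le> Bh"
  shows "(\<integral>\<omega>. W \<omega> * h (\<alpha> r \<omega> * exp (\<i> * complex_of_real (\<Phi> \<omega>))) \<partial>M)
       = (\<integral>\<omega>. h (\<alpha> r \<omega>) \<partial>M) * (\<integral>\<omega>. W \<omega> \<partial>M)"
proof -
  have am[measurable]: "\<alpha> i \<in> borel_measurable M" for i using indep unfolding indep_vars_def2 by auto
  define V where "V \<omega> = (W \<omega>, \<Phi> \<omega>)" for \<omega>
  have Vf: "V \<in> measurable (filt M \<alpha> r) (borel :: (real \<times> real) measure)"
    unfolding V_def using Wm Phim by measurable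
  have Vm[measurable]: "V \<in> measurable M (borel :: (real \<times> real) measure)"
    by (rule measurable_from_subalg[OF subalg_filt[OF am] Vf])
  have Wm'[measurable]: "W \<in> borel_measurable M" by (rule measurable_from_subalg[OF subalg_filt[OF am] Wm])
  have Phim'[measurable]: "\<Phi> \<in> borel_measurable M" by (rule measurable_from_subalg[OF subalg_filt[OF am] Phim])
  define U where "U \<omega> = cpair (\<alpha> r \<omega>)" for \<omega>
  have Um[measurable]: "U \<in> borel_measurable M" unfolding U_def by measurable
  have iv: "indep_var borel V borel U" unfolding U_def
    by (rule indep_var_filt[OF indep Vf])
  define D1 where "D1 = distr M (borel :: (real \<times> real) measure) V"
  define D2 where "D2 = distr M (borel :: (real \<times> real) measure) U"
  have jd: "D1 \<Otimes>\<^sub>M D2 = distr M (borel \<Otimes>\<^sub>M borel) (\<lambda>\<omega>. (V \<omega>, U \<omega>))"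
    using iv unfolding indep_var_distribution_eq D1_def D2_def by simp
  have p1: "prob_space D1" unfolding D1_def by (rule prob_space_distr) simp
  have p2: "prob_space D2" unfolding D2_def by (rule prob_space_distr) simp
  interpret P: pair_sigma_finite D1 D2
    using p1 p2 by (simp add: pair_sigma_finite_def prob_space_imp_sigma_finite)
  define H where "H = (\<lambda>p :: (real \<times> real) \<times> (real \<times> real). fst (fst p) * h ((complex_of_real (fst (snd p)) + \<i> * complex_of_real (snd (snd p))) * exp (\<i> * complex_of_real (snd (fst p)))))"
  have Hm[measurable]: "H \<in> borel_measurable ((borel :: (real \<times> real) measure) \<Otimes>\<^sub>M (borel :: (real \<times> real) measure))"
  proof -
    have "(\<lambda>p :: (real \<times> real) \<times> (real \<times> real). (complex_of_real (fst (snd p)) + \<i> * complex_of_real (snd (snd p))) * exp (\<i> * complex_of_real (snd (fst p)))) \<in> borel_measurable borel"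
      by (intro borel_measurable_continuous_onI continuous_intros)
    then have "(\<lambda>p :: (real \<times> real) \<times> (real \<times> real). h ((complex_of_real (fst (snd p)) + \<i> * complex_of_real (snd (snd p))) * exp (\<i> * complex_of_real (snd (fst p))))) \<in> borel_measurable borel"
      using hm by (rule measurable_compose)
    moreover have "(\<lambda>p :: (real \<times> real) \<times> (real \<times> real). fst (fst p)) \<in> borel_measurable borel"
      by (intro borel_measurable_continuous_onI continuous_intros)
    ultimately have "H \<in> borel_measurable borel" unfolding H_def by (intro borel_measurable_times)
    then show ?thesis by (simp only: borel_prod)
  qed
  define ch where "ch = (\<integral>\<omega>. h (\<alpha> r \<omega>) \<partial>M)"
  have intM: "integrable M (\<lambda>\<omega>. H (V \<omega>, U \<omega>))"
  proof (rule integrable_const_bound[where B="BW * Bh"])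
    show "AE \<omega> in M. norm (H (V \<omega>, U \<omega>)) \<le> BW * Bh"
    proof (rule AE_I2)
      fix \<omega> assume "\<omega> \<in> space M"
      then have "\<bar>W \<omega>\<bar> * \<bar>h (\<alpha> r \<omega> * exp (\<i> * complex_of_real (\<Phi> \<omega>)))\<bar> \<le> BW * Bh"
        using Wb hb by (intro mult_mono) (auto intro: order_trans[OF abs_ge_zero])
      then show "norm (H (V \<omega>, U \<omega>)) \<le> BW * Bh"
        by (simp add: H_def V_def U_def cpair_def complex_Re_Im_eq abs_mult)
    qed
  qed measurable
  have intP: "integrable (D1 \<Otimes>\<^sub>M D2) H"
    unfolding jd by (subst integrable_distr_eq) (use intM in auto)
  have "(\<integral>\<omega>. W \<omega> * h (\<alpha> r \<omega> * exp (\<i> * complex_of_real (\<Phi> \<omega>))) \<partial>M) = (\<integral>\<omega>. H (V \<omega>, U \<omega>) \<partial>M)"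
    by (simp add: H_def V_def U_def cpair_def complex_Re_Im_eq)
  also have "\<dots> = (\<integral>y. H y \<partial>(D1 \<Otimes>\<^sub>M D2))"
    unfolding jd by (rule integral_distr[symmetric]) auto
  also have "\<dots> = (\<integral>x. (\<integral>z. H (x, z) \<partial>D2) \<partial>D1)"
    by (rule P.integral_fst'[OF intP, symmetric])
  also have "\<dots> = (\<integral>x. fst x * ch \<partial>D1)"
  proof (rule Bochner_Integration.integral_cong[OF refl])
    fix x :: "real \<times> real"
    define c where "c = exp (\<i> * complex_of_real (snd x))"
    have c1: "cmod c = 1" unfolding c_def by simp
    have "(\<lambda>z::real \<times> real. (complex_of_real (fst z) + \<i> * complex_of_real (snd z)) * exp (\<i> * complex_of_real (snd x))) \<in> borel_measurable borel"
      by (intro borel_measurable_continuous_onI continuous_intros)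
    then have "(\<lambda>z::real \<times> real. h ((complex_of_real (fst z) + \<i> * complex_of_real (snd z)) * exp (\<i> * complex_of_real (snd x)))) \<in> borel_measurable borel"
      using hm by (rule measurable_compose)
    then have [measurable]: "(\<lambda>z::real \<times> real. fst x * h ((complex_of_real (fst z) + \<i> * complex_of_real (snd z)) * exp (\<i> * complex_of_real (snd x)))) \<in> borel_measurable borel"
      by (intro borel_measurable_times borel_measurable_const)
    have "(\<integral>z. H (x, z) \<partial>D2) = (\<integral>\<omega>. fst x * h (\<alpha> r \<omega> * c) \<partial>M)"
      unfolding D2_def H_def c_def by (subst integral_distr) (auto simp: U_def cpair_def complex_Re_Im_eq)
    also have "\<dots> = fst x * (\<integral>\<omega>. h (c * \<alpha> r \<omega>) \<partial>M)"
      by (simp add: mult.commute)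
    also have "(\<integral>\<omega>. h (c * \<alpha> r \<omega>) \<partial>M) = (\<integral>z. h z \<partial>distr M borel (\<lambda>\<omega>. c * \<alpha> r \<omega>))"
      by (subst integral_distr) auto
    also have "\<dots> = (\<integral>z. h z \<partial>distr M borel (\<alpha> r))" by (simp only: rot_inv[OF c1])
    also have "\<dots> = ch" unfolding ch_def by (subst integral_distr) auto
    finally show "(\<integral>z. H (x, z) \<partial>D2) = fst x * ch" .
  qed
  also have "\<dots> = (\<integral>\<omega>. W \<omega> * ch \<partial>M)"
    supply [measurable] = borel_measurable_continuous_onI[OF continuous_on_mult[OF continuous_on_fst[OF continuous_on_id] continuous_on_const], of ch]
    unfolding D1_def by (subst integral_distr) (auto simp: V_def)
  also have "\<dots> = ch * (\<integral>\<omega>. W \<omega> \<partial>M)" by (simp add: mult.commute)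
  finally show ?thesis unfolding ch_def .
qed

end



lemma log_term:
  assumes b: "\<beta> > 0"
  shows "1 / (1 + \<beta> * real (Suc s)) \<le> (ln (1 + \<beta> * real (Suc s)) - ln (1 + \<beta> * real s)) / \<beta>"
proof -
  define u where "u = 1 + \<beta> * real s"
  define v where "v = 1 + \<beta> * real (Suc s)"
  have u: "u > 0" unfolding u_def using b by (simp add: add_pos_nonneg)
  have v: "v > 0" unfolding v_def using b by (simp add: add_pos_nonneg)
  have vu: "v = u + \<beta>" unfolding u_def v_def by (simp add: algebra_simps)
  have "ln (u / v) \<le> u / v - 1" using u v by (intro ln_le_minus_one) simp
  then have "ln u - ln v \<le> u / v - 1" using u v by (simp add: ln_div)
  also have "u / v - 1 = - \<beta> / v" using v vu by (simp add: field_simps)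
  finally have "\<beta> / v \<le> ln v - ln u" by simp
  then have "\<beta> * (1 / v) \<le> ln v - ln u" by simp
  then have "1 / v \<le> (ln v - ln u) / \<beta>" using b by (simp add: field_simps)
  then show ?thesis unfolding u_def v_def .
qed

lemma log_telescope:
  assumes b: "\<beta> > 0"
  shows "(\<Sum>i<l. 1 / (1 + \<beta> * real (j + i + 1))) \<le> ln (1 + \<beta> * real l / (1 + \<beta> * real j)) / \<beta>"
proof -
  define f where "f i = ln (1 + \<beta> * real (j + i))" for i
  have "(\<Sum>i<l. 1 / (1 + \<beta> * real (j + i + 1))) \<le> (\<Sum>i<l. (f (Suc i) - f i) / \<beta>)"
  proof (rule sum_mono)
    fix i
    show "1 / (1 + \<beta> * real (j + i + 1)) \<le> (f (Suc i) - f i) / \<beta>"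
      using log_term[OF b, of "j + i"] by (simp add: f_def)
  qed
  also have "\<dots> = (\<Sum>i<l. f (Suc i) - f i) / \<beta>" by (simp add: sum_divide_distrib)
  also have "(\<Sum>i<l. f (Suc i) - f i) = f l - f 0" by (rule sum_lessThan_telescope)
  also have "f l - f 0 = ln (1 + \<beta> * real l / (1 + \<beta> * real j))"
  proof -
    have p1: "1 + \<beta> * real j > 0" using b by (simp add: add_pos_nonneg)
    have p2: "1 + \<beta> * real (j + l) > 0" using b by (simp add: add_pos_nonneg)
    have "f l - f 0 = ln ((1 + \<beta> * real (j + l)) / (1 + \<beta> * real j))"
      using p1 p2 by (simp add: f_def ln_div)
    also have "(1 + \<beta> * real (j + l)) / (1 + \<beta> * real j) = 1 + \<beta> * real l / (1 + \<beta> * real j)"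
      using p1 by (simp add: field_simps)
    finally show ?thesis .
  qed
  finally show ?thesis .
qed

definition Ssum :: "(nat \<Rightarrow> 'w \<Rightarrow> complex) \<Rightarrow> real \<Rightarrow> nat \<Rightarrow> nat \<Rightarrow> 'w \<Rightarrow> real" where
  "Ssum \<alpha> \<theta> j m \<omega> = (\<Sum>i<m. gfun (\<alpha> (j + i) \<omega> * exp (\<i> * complex_of_real (PsiW \<alpha> \<theta> (j + i) \<omega>))))"

lemma Ssum_measurable: "Ssum \<alpha> \<theta> j m \<in> borel_measurable (filt M \<alpha> (j + m))"
  unfolding Ssum_def
proof (intro borel_measurable_sum)
  fix i assume i: "i \<in> {..<m}"
  have [measurable]: "\<alpha> (j + i) \<in> borel_measurable (filt M \<alpha> (j + m))"
    using i by (intro alpha_filt_measurable) auto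
  have [measurable]: "PsiW \<alpha> \<theta> (j + i) \<in> borel_measurable (filt M \<alpha> (j + m))"
    using i by (intro measurable_filt_mono[OF _ PsiW_filt_measurable]) auto
  show "(\<lambda>\<omega>. gfun (\<alpha> (j + i) \<omega> * exp (\<i> * complex_of_real (PsiW \<alpha> \<theta> (j + i) \<omega>)))) \<in> borel_measurable (filt M \<alpha> (j + m))"
    by measurable
qed

lemma Ssum_bound: "\<bar>Ssum \<alpha> \<theta> j m \<omega>\<bar> \<le> real m * (2 * (pi + \<bar>Im (Ln 0)\<bar>))"
proof -
  have "\<bar>Ssum \<alpha> \<theta> j m \<omega>\<bar> \<le> (\<Sum>i<m. \<bar>gfun (\<alpha> (j + i) \<omega> * exp (\<i> * complex_of_real (PsiW \<alpha> \<theta> (j + i) \<omega>)))\<bar>)"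
    unfolding Ssum_def by (rule sum_abs)
  also have "\<dots> \<le> (\<Sum>i<m. 2 * (pi + \<bar>Im (Ln 0)\<bar>))" by (intro sum_mono gfun_bound)
  finally show ?thesis by simp
qed

lemma Ssum_Suc: "Ssum \<alpha> \<theta> j (Suc m) \<omega> = Ssum \<alpha> \<theta> j m \<omega> + gfun (\<alpha> (j + m) \<omega> * exp (\<i> * complex_of_real (PsiW \<alpha> \<theta> (j + m) \<omega>)))"
  by (simp add: Ssum_def)

context prob_space
begin

lemma prod_formula:
  assumes indep: "indep_vars (\<lambda>_. borel) \<alpha> UNIV"
    and rot_inv: "\<And>k c. cmod c = 1 \<Longrightarrow> distr M borel (\<lambda>\<omega>. c * \<alpha> k \<omega>) = distr M borel (\<alpha> k)"
    and A: "A \<in> sets (filt M \<alpha> j)"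
  shows "(\<integral>\<omega>. indicator A \<omega> * exp (q * Ssum \<alpha> \<theta> j m \<omega>) \<partial>M)
       = (\<Prod>i<m. \<integral>\<omega>. exp (q * gfun (\<alpha> (j + i) \<omega>)) \<partial>M) * measure M A"
proof (induction m)
  case 0
  have am: "\<And>i. \<alpha> i \<in> borel_measurable M" using indep unfolding indep_vars_def2 by auto
  have "subalgebra M (filt M \<alpha> j)" by (rule subalg_filt) (rule am)
  then have "A \<in> sets M" using A by (auto simp: subalgebra_def)
  then show ?case by (simp add: Ssum_def)
next
  case (Suc m)
  define B0 where "B0 = 2 * (pi + \<bar>Im (Ln 0)\<bar>)"
  define W where "W \<omega> = indicator A \<omega> * exp (q * Ssum \<alpha> \<theta> j m \<omega>)" for \<omega>
  define h where "h z = exp (q * gfun z)" for z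
  have Am: "indicator A \<in> borel_measurable (filt M \<alpha> (j + m))"
  proof -
    have "indicator A \<in> borel_measurable (filt M \<alpha> j)" using A by simp
    then show ?thesis by (rule measurable_filt_mono[rotated]) simp
  qed
  have [measurable]: "Ssum \<alpha> \<theta> j m \<in> borel_measurable (filt M \<alpha> (j + m))" by (rule Ssum_measurable)
  have Wm: "W \<in> borel_measurable (filt M \<alpha> (j + m))"
    unfolding W_def using Am by measurable
  have Wb: "\<bar>W \<omega>\<bar> \<le> exp (\<bar>q\<bar> * (real m * B0))" for \<omega>
  proof -
    have "q * Ssum \<alpha> \<theta> j m \<omega> \<le> \<bar>q\<bar> * (real m * B0)"
    proof -
      have "q * Ssum \<alpha> \<theta> j m \<omega> \<le> \<bar>q\<bar> * \<bar>Ssum \<alpha> \<theta> j m \<omega>\<bar>" by (simp add: abs_mult[symmetric])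
      also have "\<dots> \<le> \<bar>q\<bar> * (real m * B0)" unfolding B0_def by (intro mult_left_mono Ssum_bound) simp
      finally show ?thesis .
    qed
    then have "exp (q * Ssum \<alpha> \<theta> j m \<omega>) \<le> exp (\<bar>q\<bar> * (real m * B0))" by simp
    then show ?thesis unfolding W_def by (auto simp: indicator_def)
  qed
  have hm: "h \<in> borel_measurable borel" unfolding h_def by measurable
  have hb: "\<bar>h z\<bar> \<le> exp (\<bar>q\<bar> * B0)" for z
  proof -
    have "q * gfun z \<le> \<bar>q\<bar> * \<bar>gfun z\<bar>" by (simp add: abs_mult[symmetric])
    also have "\<dots> \<le> \<bar>q\<bar> * B0" unfolding B0_def by (intro mult_left_mono gfun_bound) simp
    finally show ?thesis unfolding h_def by simp
  qed
  have Phim: "PsiW \<alpha> \<theta> (j + m) \<in> borel_measurable (filt M \<alpha> (j + m))" by (rule PsiW_filt_measurable)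
  have "(\<integral>\<omega>. indicator A \<omega> * exp (q * Ssum \<alpha> \<theta> j (Suc m) \<omega>) \<partial>M)
      = (\<integral>\<omega>. W \<omega> * h (\<alpha> (j + m) \<omega> * exp (\<i> * complex_of_real (PsiW \<alpha> \<theta> (j + m) \<omega>))) \<partial>M)"
    by (simp add: W_def h_def Ssum_Suc distrib_left exp_add mult.assoc)
  also have "\<dots> = (\<integral>\<omega>. h (\<alpha> (j + m) \<omega>) \<partial>M) * (\<integral>\<omega>. W \<omega> \<partial>M)"
    by (rule indep_integral[OF indep rot_inv Wm Phim Wb hm hb])
  also have "\<dots> = (\<Prod>i<Suc m. \<integral>\<omega>. exp (q * gfun (\<alpha> (j + i) \<omega>)) \<partial>M) * measure M A"
    using Suc.IH unfolding W_def h_def by (simp add: mult_ac)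
  finally show ?case .
qed

end



lemma bound_algebra:
  fixes t L \<beta> V :: real
  assumes L: "L > 0" and b: "\<beta> > 0" and V: "V \<le> L / \<beta>" and V0: "V \<ge> 0"
  defines "q \<equiv> t * \<beta> / (4 * L)"
  shows "exp (- q * t) * exp (2 * q^2 * V) \<le> exp (- (t^2 * \<beta> / (8 * L)))"
proof -
  have "2 * q^2 * V \<le> 2 * q^2 * (L / \<beta>)" using V by (intro mult_left_mono) auto
  also have "2 * q^2 * (L / \<beta>) = t^2 * \<beta> / (8 * L)"
    unfolding q_def using L b by (simp add: field_simps power2_eq_square)
  finally have "- q * t + 2 * q^2 * V \<le> - (t^2 * \<beta> / (8 * L))"
  proof -
    assume "2 * q^2 * V \<le> t^2 * \<beta> / (8 * L)"
    moreover have "q * t = t^2 * \<beta> / (4 * L)" unfolding q_def by (simp add: power2_eq_square)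
    moreover have "t^2 * \<beta> / (4 * L) = 2 * (t^2 * \<beta> / (8 * L))" by simp
    ultimately show ?thesis by linarith
  qed
  then show ?thesis by (simp add: exp_add[symmetric])
qed

theorem proposition3p1:
  fixes M :: "'w measure" and j l :: nat and \<theta> t :: real and \<alpha> :: "nat \<Rightarrow> 'w \<Rightarrow> complex" and \<beta> :: real
  assumes "prob_space M"
    and "\<beta> > 0"
    and indep: "prob_space.indep_vars M (\<lambda>_. borel) \<alpha> UNIV"
    and rot_inv: "\<And>k c. cmod c = 1 \<Longrightarrow>
           distr M borel (\<lambda>\<omega>. c * \<alpha> k \<omega>) = distr M borel (\<alpha> k)"
    and beta_law: "\<And>k. distributed M lborel (\<lambda>\<omega>. (cmod (\<alpha> k \<omega>))\<^sup>2)
           (\<lambda>x. ennreal (indicator {0..1} x * (\<beta> * real (k + 1) / 2)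
                 * (1 - x) powr (\<beta> * real (k + 1) / 2 - 1)))"
    and "t > 0"
  shows "AE \<omega> in M.
           real_cond_exp M (filt M \<alpha> j)
             (indicator {\<omega>' \<in> space M.
                \<bar>Psi (\<lambda>r. \<alpha> r \<omega>') (j + l) \<theta> - Psi (\<lambda>r. \<alpha> r \<omega>') j \<theta> - real l * \<theta>\<bar> \<ge> t}) \<omega>
         \<le> (if l = 0 then 0
             else 2 * exp (- (t\<^sup>2 * \<beta> / (8 * ln (1 + \<beta> * real l / (1 + \<beta> * real j))))))"
proof -
  interpret prob_space M by fact
  have b: "\<beta> > 0" and t: "t > 0" by fact+
  have am[measurable]: "\<And>i. \<alpha> i \<in> borel_measurable M" using indep unfolding indep_vars_def2 by auto
  have sub: "subalgebra M (filt M \<alpha> j)" by (rule subalg_filt) (rule am)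
  interpret F: finite_measure_subalgebra M "filt M \<alpha> j"
    by (simp add: finite_measure_subalgebra_def finite_measure_subalgebra_axioms_def sub finite_measure_axioms)
  define S where "S = Ssum \<alpha> \<theta> j l"
  have Seq: "Psi (\<lambda>r. \<alpha> r \<omega>) (j + l) \<theta> - Psi (\<lambda>r. \<alpha> r \<omega>) j \<theta> - real l * \<theta> = S \<omega>" for \<omega>
    using PsiW_incr[of \<alpha> \<theta> j l \<omega>] unfolding S_def Ssum_def PsiW_def by simp
  define Q where "Q = {\<omega>' \<in> space M. t \<le> \<bar>S \<omega>'\<bar>}"
  have Qeq: "{\<omega>' \<in> space M. \<bar>Psi (\<lambda>r. \<alpha> r \<omega>') (j + l) \<theta> - Psi (\<lambda>r. \<alpha> r \<omega>') j \<theta> - real l * \<theta>\<bar> \<ge> t} = Q"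
    unfolding Q_def Seq ..
  have Sm[measurable]: "S \<in> borel_measurable M"
    unfolding S_def by (rule measurable_from_subalg[OF subalg_filt[OF am] Ssum_measurable])
  have Qm[measurable]: "Q \<in> sets M" unfolding Q_def by measurable
  show ?thesis
  proof (cases "l = 0")
    case True
    then have "Q = {}" unfolding Q_def S_def Ssum_def using t by auto
    then have i0: "indicator Q = (\<lambda>_. 0 :: real)" by (simp add: fun_eq_iff)
    have "AE \<omega> in M. real_cond_exp M (filt M \<alpha> j) (\<lambda>_. 0 :: real) \<omega> = 0"
      by (rule F.real_cond_exp_charact) auto
    then have "AE \<omega> in M. real_cond_exp M (filt M \<alpha> j) (\<lambda>_. 0 :: real) \<omega> \<le> 0"
      by eventually_elim simp
    then show ?thesis unfolding Qeq i0 using True by simp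
  next
    case False
    then have l: "l > 0" by simp
    define L where "L = ln (1 + \<beta> * real l / (1 + \<beta> * real j))"
    have pj: "1 + \<beta> * real j > 0" using b by (simp add: add_pos_nonneg)
    have L: "L > 0" unfolding L_def using b l pj by (intro ln_gt_zero) (simp add: add_pos_pos)
    define q where "q = t * \<beta> / (4 * L)"
    have q: "q > 0" unfolding q_def using t b L by simp
    define cp where "cp s r = (\<integral>\<omega>. exp (s * gfun (\<alpha> r \<omega>)) \<partial>M)" for s r
    define K where "K = exp (- q * t) * (\<Prod>i<l. cp q (j + i)) + exp (- q * t) * (\<Prod>i<l. cp (-q) (j + i))"
    define Zf where "Zf \<omega> = exp (q * (S \<omega> - t)) + exp (- q * (S \<omega> + t))" for \<omega>
    have Zm[measurable]: "Zf \<in> borel_measurable M" unfolding Zf_def by measurable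
    define B0 where "B0 = real l * (2 * (pi + \<bar>Im (Ln 0)\<bar>))"
    have Sb: "\<bar>S \<omega>\<bar> \<le> B0" for \<omega> unfolding S_def B0_def by (rule Ssum_bound)
    have expS: "exp (s * S \<omega>) \<le> exp (\<bar>s\<bar> * B0)" for s \<omega>
    proof -
      have "s * S \<omega> \<le> \<bar>s\<bar> * \<bar>S \<omega>\<bar>" by (simp add: abs_mult[symmetric])
      also have "\<dots> \<le> \<bar>s\<bar> * B0" by (intro mult_left_mono Sb) simp
      finally show ?thesis by simp
    qed
    have intS: "integrable M (\<lambda>\<omega>. indicator A \<omega> * exp (s * S \<omega>))" if "A \<in> sets M" for A s
    proof (rule integrable_const_bound[where B="exp (\<bar>s\<bar> * B0)"])
      show "AE \<omega> in M. norm (indicator A \<omega> * exp (s * S \<omega>)) \<le> exp (\<bar>s\<bar> * B0)"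
        using expS by (auto simp: indicator_def)
    qed (use that in measurable)
    have intZ: "integrable M Zf"
    proof (rule integrable_const_bound[where B="exp (q * t) * (2 * exp (q * B0))"])
      show "AE \<omega> in M. norm (Zf \<omega>) \<le> exp (q * t) * (2 * exp (q * B0))"
      proof (rule AE_I2)
        fix \<omega>
        have e1: "exp (q * (S \<omega> - t)) = exp (- q * t) * exp (q * S \<omega>)" by (simp add: exp_add[symmetric] algebra_simps)
        have e2: "exp (- q * (S \<omega> + t)) = exp (- q * t) * exp ((- q) * S \<omega>)" by (simp add: exp_add[symmetric] algebra_simps)
        have i1: "exp (q * S \<omega>) \<le> exp (q * B0)" using expS[of q \<omega>] q by simp
        have i2: "exp ((- q) * S \<omega>) \<le> exp (q * B0)" using expS[of "-q" \<omega>] q by simp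
        have i3: "exp (- q * t) \<le> exp (q * t)" using q t by simp
        have j1: "exp (- q * t) * exp (q * S \<omega>) \<le> exp (q * t) * exp (q * B0)"
          using i1 i3 by (intro mult_mono) auto
        have j2: "exp (- q * t) * exp ((- q) * S \<omega>) \<le> exp (q * t) * exp (q * B0)"
          using i2 i3 by (intro mult_mono) auto
        have "Zf \<omega> = exp (- q * t) * exp (q * S \<omega>) + exp (- q * t) * exp ((- q) * S \<omega>)"
          unfolding Zf_def e1 e2 ..
        then have "Zf \<omega> \<le> exp (q * t) * (2 * exp (q * B0))" using j1 j2 by linarith
        then show "norm (Zf \<omega>) \<le> exp (q * t) * (2 * exp (q * B0))" unfolding Zf_def by simp
      qed
    qed measurable
    have intQ: "integrable M (indicator Q :: 'w \<Rightarrow> real)"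
      by (rule integrable_real_indicator) (auto simp: less_top[symmetric])
    have le1: "AE \<omega> in M. real_cond_exp M (filt M \<alpha> j) (indicator Q) \<omega> \<le> real_cond_exp M (filt M \<alpha> j) Zf \<omega>"
    proof (rule F.real_cond_exp_mono[OF _ intQ intZ], rule AE_I2)
      fix \<omega>
      show "indicator Q \<omega> \<le> Zf \<omega>"
      proof (cases "\<omega> \<in> Q")
        case True
        then have "t \<le> \<bar>S \<omega>\<bar>" unfolding Q_def by auto
        then have "S \<omega> - t \<ge> 0 \<or> - (S \<omega> + t) \<ge> 0" by auto
        then have "1 \<le> exp (q * (S \<omega> - t)) \<or> 1 \<le> exp (- q * (S \<omega> + t))"
        proof
          assume "S \<omega> - t \<ge> 0"
          then have "q * (S \<omega> - t) \<ge> 0" using q by simp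
          then show ?thesis by simp
        next
          assume "- (S \<omega> + t) \<ge> 0"
          then have "q * (- (S \<omega> + t)) \<ge> 0" using q by simp
          moreover have "q * (- (S \<omega> + t)) = - q * (S \<omega> + t)" by (simp add: algebra_simps)
          ultimately have "- q * (S \<omega> + t) \<ge> 0" by linarith
          then show ?thesis using one_le_exp_iff by blast
        qed
        then show ?thesis using True unfolding Zf_def
          by (auto intro: add_increasing add_increasing2 less_imp_le)
      next
        case False
        then show ?thesis unfolding Zf_def by (simp add: add_nonneg_nonneg)
      qed
    qed
    have eqK: "AE \<omega> in M. real_cond_exp M (filt M \<alpha> j) Zf \<omega> = K"
    proof (rule F.real_cond_exp_charact)
      fix A assume A: "A \<in> sets (filt M \<alpha> j)"
      then have AM: "A \<in> sets M" using sub by (auto simp: subalgebra_def)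
      have p1: "(\<integral>\<omega>. indicator A \<omega> * exp (q * S \<omega>) \<partial>M) = (\<Prod>i<l. cp q (j + i)) * measure M A"
        unfolding S_def cp_def by (rule prod_formula[OF indep rot_inv A])
      have p2: "(\<integral>\<omega>. indicator A \<omega> * exp ((- q) * S \<omega>) \<partial>M) = (\<Prod>i<l. cp (-q) (j + i)) * measure M A"
        unfolding S_def cp_def by (rule prod_formula[OF indep rot_inv A])
      have "(\<integral>\<omega>\<in>A. Zf \<omega> \<partial>M) = (\<integral>\<omega>. exp (- q * t) * (indicator A \<omega> * exp (q * S \<omega>)) + exp (- q * t) * (indicator A \<omega> * exp ((- q) * S \<omega>)) \<partial>M)"
        unfolding set_lebesgue_integral_def Zf_def
        by (intro Bochner_Integration.integral_cong refl) (simp add: exp_add[symmetric] algebra_simps)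
      also have "\<dots> = exp (- q * t) * (\<integral>\<omega>. indicator A \<omega> * exp (q * S \<omega>) \<partial>M) + exp (- q * t) * (\<integral>\<omega>. indicator A \<omega> * exp ((- q) * S \<omega>) \<partial>M)"
        using intS[OF AM, of q] intS[OF AM, of "-q"] by simp
      also have "\<dots> = K * measure M A" unfolding p1 p2 K_def by (simp add: algebra_simps)
      also have "\<dots> = (\<integral>\<omega>\<in>A. K \<partial>M)" using AM by (simp add: set_lebesgue_integral_def mult.commute)
      finally show "(\<integral>\<omega>\<in>A. Zf \<omega> \<partial>M) = (\<integral>\<omega>\<in>A. K \<partial>M)" .
    qed (use intZ in auto)
    have cp_bound: "cp s (j + i) \<le> exp (2 * s^2 * (1 / (1 + \<beta> * real (j + i + 1))))" for s i
    proof -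
      define a where "a = \<beta> * real (j + i + 1) / 2"
      have a: "a > 0" unfolding a_def using b by simp
      have "cp s (j + i) \<le> exp (s^2 / (a + 1/2))"
        unfolding cp_def gfun_def a_def
        by (rule mgf_bound[OF am _ beta_law a[unfolded a_def]]) (simp add: rot_inv)
      also have "s^2 / (a + 1/2) = 2 * s^2 * (1 / (1 + \<beta> * real (j + i + 1)))"
        unfolding a_def by (simp add: field_simps)
      finally show ?thesis .
    qed
    have cp_pos: "cp s r \<ge> 0" for s r unfolding cp_def by simp
    define V where "V = (\<Sum>i<l. 1 / (1 + \<beta> * real (j + i + 1)))"
    have V: "V \<le> L / \<beta>" unfolding V_def L_def by (rule log_telescope[OF b])
    have V0: "V \<ge> 0" unfolding V_def using b by (intro sum_nonneg) (simp add: add_pos_nonneg less_imp_le)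
    have prodb: "(\<Prod>i<l. cp s (j + i)) \<le> exp (2 * s^2 * V)" for s
    proof -
      have "(\<Prod>i<l. cp s (j + i)) \<le> (\<Prod>i<l. exp (2 * s^2 * (1 / (1 + \<beta> * real (j + i + 1)))))"
        by (intro prod_mono conjI cp_pos cp_bound)
      also have "\<dots> = exp (2 * s^2 * V)" unfolding V_def by (simp add: exp_sum sum_distrib_left)
      finally show ?thesis .
    qed
    have "K \<le> exp (- q * t) * exp (2 * q^2 * V) + exp (- q * t) * exp (2 * q^2 * V)"
      unfolding K_def using prodb[of q] prodb[of "-q"]
      by (intro add_mono mult_left_mono) auto
    also have "\<dots> \<le> 2 * exp (- (t^2 * \<beta> / (8 * L)))"
      using bound_algebra[OF L b V V0, of t] unfolding q_def by simp
    finally have Kb: "K \<le> 2 * exp (- (t^2 * \<beta> / (8 * L)))" .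
    have "AE \<omega> in M. real_cond_exp M (filt M \<alpha> j) (indicator Q) \<omega> \<le> 2 * exp (- (t^2 * \<beta> / (8 * L)))"
      using le1 eqK by eventually_elim (use Kb in linarith)
    then show ?thesis unfolding Qeq L_def using False by simp
  qed
qed


end
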